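(* Consider the mining game with $N\ge 2$ miners, costs-per-hash $0<c_1\le\dots\le c_N$, reward $R>0$ and capacity parameter $\gamma\ge0$. The number of active miners in the unique equilibrium hash rate profile is the largest integer $n$ with $2\le n\le N$ such that $$c_n<\frac{c^{(n)}+R\gamma/c_n}{n-1},\qquad c^{(n)}=\sum_{i=1}^n c_i.$$ This number $n$ is (weakly) increasing in $R$ and in $\gamma$.
   Context: Mining game: $N\ge2$ miners with costs-per-hash $0<c_1\le\dots\le c_N$; each miner $i$ chooses $h_i\ge0$, $H=\sum_j h_j$, and the payoff of miner $i$ is $\frac{h_i}{H}R-c_ih_i-\frac{\gamma}{2}h_i^2$ if $H>0$, and $0$ if $H=0$. An equilibrium hash rate profile is a pure-strategy Nash equilibrium $h^*\in[0,\infty)^N$; it exists and is unique. Miner $i$ is active if $h_i^*>0$. *)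

theory Defs
  imports Complex_Main
begin

text \<open>Miners are indexed by 1..N; a hash rate profile is a function nat to real,
  only its values on 1..N matter.\<close>

definition total_hash :: "nat \<Rightarrow> (nat \<Rightarrow> real) \<Rightarrow> real" where
  "total_hash N h = (\<Sum>j\<in>{1..N}. h j)"

definition payoff :: "nat \<Rightarrow> real \<Rightarrow> real \<Rightarrow> (nat \<Rightarrow> real) \<Rightarrow> (nat \<Rightarrow> real) \<Rightarrow> nat \<Rightarrow> real" where
  "payoff N R \<gamma> c h i =
     (if total_hash N h > 0
      then h i / total_hash N h * R - c i * h i - \<gamma> / 2 * (h i)\<^sup>2
      else 0)"

definition is_equilibrium :: "nat \<Rightarrow> real \<Rightarrow> real \<Rightarrow> (nat \<Rightarrow> real) \<Rightarrow> (nat \<Rightarrow> real) \<Rightarrow> bool" where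
  "is_equilibrium N R \<gamma> c h \<longleftrightarrow>
     (\<forall>i\<in>{1..N}. h i \<ge> 0) \<and>
     (\<forall>i\<in>{1..N}. \<forall>x::real. x \<ge> 0 \<longrightarrow> payoff N R \<gamma> c (h(i := x)) i \<le> payoff N R \<gamma> c h i)"

definition active_miners :: "nat \<Rightarrow> (nat \<Rightarrow> real) \<Rightarrow> nat set" where
  "active_miners N h = {i\<in>{1..N}. h i > 0}"

definition num_active :: "nat \<Rightarrow> real \<Rightarrow> real \<Rightarrow> (nat \<Rightarrow> real) \<Rightarrow> nat" where
  "num_active N R \<gamma> c =
     (GREATEST n. 2 \<le> n \<and> n \<le> N \<and>
        c n < ((\<Sum>i\<in>{1..n}. c i) + R * \<gamma> / c n) / (real n - 1))"

end

theory Submission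
  imports Defs
begin


lemma total_upd:
  assumes "i \<in> {1..N}"
  shows "total_hash N (h(i:=x)) = total_hash N h - h i + x"
proof -
  have "sum (h(i:=x)) {1..N} = (h(i:=x)) i + sum (h(i:=x)) ({1..N}-{i})"
    by (rule sum.remove) (use assms in auto)
  also have "sum (h(i:=x)) ({1..N}-{i}) = sum h ({1..N}-{i})"
    by (rule sum.cong) auto
  also have "sum h {1..N} = h i + sum h ({1..N}-{i})"
    by (rule sum.remove) (use assms in auto)
  then have "sum h ({1..N}-{i}) = sum h {1..N} - h i" by simp
  finally show ?thesis unfolding total_hash_def by simp
qed

lemma foc_suff:
  fixes R S c \<gamma> h x :: real
  assumes "R > 0" "S > 0" "\<gamma> \<ge> 0" "h \<ge> 0" "x \<ge> 0" "R*S = (c + \<gamma>*h)*(h+S)^2"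
  shows "x/(x+S)*R - c*x - \<gamma>/2*x^2 \<le> h/(h+S)*R - c*h - \<gamma>/2*h^2"
proof -
  have hc: "c = R*S/(h+S)^2 - \<gamma>*h" using assms by (simp add: field_simps)
  have id1: "(x/(x+S)*R - c*x - \<gamma>/2*x^2) - (h/(h+S)*R - c*h - \<gamma>/2*h^2)
      = (x-h)*(R*S/((x+S)*(h+S)) - c - \<gamma>*(x+h)/2)"
  proof -
    have q: "x/(x+S) - h/(h+S) = S*(x-h)/((x+S)*(h+S))" using assms by (simp add: field_simps)
    have "(x/(x+S)*R - c*x - \<gamma>/2*x^2) - (h/(h+S)*R - c*h - \<gamma>/2*h^2)
       = R*(x/(x+S) - h/(h+S)) - c*(x-h) - \<gamma>/2*((x-h)*(x+h))"
      by (simp add: algebra_simps power2_eq_square)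
    also have "\<dots> = R*(S*(x-h)/((x+S)*(h+S))) - c*(x-h) - \<gamma>/2*((x-h)*(x+h))" using q by simp
    also have "\<dots> = (x-h)*(R*S/((x+S)*(h+S)) - c - \<gamma>*(x+h)/2)"
      by (simp add: field_simps)
    finally show ?thesis .
  qed
  have id2: "R*S/((x+S)*(h+S)) - c - \<gamma>*(x+h)/2 = -(x-h)*(R*S/((x+S)*(h+S)^2) + \<gamma>/2)"
  proof -
    have q: "R*S/((x+S)*(h+S)) - R*S/(h+S)^2 = -(x-h)*(R*S/((x+S)*(h+S)^2))"
    proof -
      have "x+S > 0" "h+S > 0" using assms(2,4,5) by auto
      moreover have gen: "\<And>a b. a > 0 \<Longrightarrow> b > 0 \<Longrightarrow> R*S/(a*b) - R*S/b^2 = (b-a)*(R*S/(a*b^2))"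
        by (simp add: field_simps power2_eq_square)
      ultimately have "R*S/((x+S)*(h+S)) - R*S/(h+S)^2 = ((h+S)-(x+S))*(R*S/((x+S)*(h+S)^2))"
        by blast
      then show ?thesis by simp
    qed
    have gen: "\<And>A B Q c. c = B - \<gamma>*h \<Longrightarrow> A - B = -(x-h)*Q \<Longrightarrow>
       A - c - \<gamma>*(x+h)/2 = -(x-h)*(Q + \<gamma>/2)"
      by (simp add: algebra_simps) (simp add: field_simps)
    show ?thesis by (rule gen[OF hc q])
  qed
  have "0 \<le> R*S/((x+S)*(h+S)^2) + \<gamma>/2"
    using assms(1-5) by (intro add_nonneg_nonneg divide_nonneg_nonneg) auto
  then have "0 \<le> (x-h)*(x-h)*(R*S/((x+S)*(h+S)^2) + \<gamma>/2)"
    by (rule mult_nonneg_nonneg[OF zero_le_square])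
  moreover have gen: "\<And>d E Q::real. d = (x-h)*E \<Longrightarrow> E = -(x-h)*Q \<Longrightarrow> 0 \<le> (x-h)*(x-h)*Q \<Longrightarrow> d \<le> 0"
    by (simp add: algebra_simps)
  ultimately have "(x/(x+S)*R - c*x - \<gamma>/2*x^2) - (h/(h+S)*R - c*h - \<gamma>/2*h^2) \<le> 0"
    using gen[OF id1 id2] by blast
  then show ?thesis by linarith
qed

lemma zero_opt:
  fixes R S c \<gamma> x :: real
  assumes "R > 0" "S > 0" "\<gamma> \<ge> 0" "x \<ge> 0" "R \<le> c*S"
  shows "x/(x+S)*R - c*x - \<gamma>/2*x^2 \<le> 0"
proof -
  have "x/(x+S)*R \<le> x/S*R"
    using assms by (intro mult_right_mono divide_left_mono) auto
  also have "x/S*R \<le> c*x"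
  proof -
    have "R*x \<le> (c*S)*x" using assms by (intro mult_right_mono) auto
    then show ?thesis using assms by (simp add: field_simps)
  qed
  finally have "x/(x+S)*R \<le> c*x" .
  moreover have "0 \<le> \<gamma>/2*x^2" using assms by simp
  ultimately show ?thesis by linarith
qed

lemma diff_id:
  fixes R S c \<gamma> h x :: real
  assumes "S > 0" "h \<ge> 0" "x \<ge> 0"
  shows "(x/(x+S)*R - c*x - \<gamma>/2*x^2) - (h/(h+S)*R - c*h - \<gamma>/2*h^2)
      = (x-h)*((R*S/(h+S)^2 - c - \<gamma>*h) - (x-h)*(R*S/((x+S)*(h+S)^2) + \<gamma>/2))"
proof -
  have q0: "x/(x+S) - h/(h+S) = S*(x-h)/((x+S)*(h+S))" using assms by (simp add: field_simps)
  have "(x/(x+S)*R - c*x - \<gamma>/2*x^2) - (h/(h+S)*R - c*h - \<gamma>/2*h^2)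
     = R*(x/(x+S) - h/(h+S)) - c*(x-h) - \<gamma>/2*((x-h)*(x+h))"
    by (simp add: algebra_simps power2_eq_square)
  also have "\<dots> = R*(S*(x-h)/((x+S)*(h+S))) - c*(x-h) - \<gamma>/2*((x-h)*(x+h))" using q0 by simp
  also have "\<dots> = (x-h)*(R*S/((x+S)*(h+S)) - c - \<gamma>*(x+h)/2)"
    by (simp add: field_simps)
  finally have id1: "(x/(x+S)*R - c*x - \<gamma>/2*x^2) - (h/(h+S)*R - c*h - \<gamma>/2*h^2)
     = (x-h)*(R*S/((x+S)*(h+S)) - c - \<gamma>*(x+h)/2)" .
  have "x+S > 0" "h+S > 0" using assms by auto
  moreover have gen: "\<And>a b. a > 0 \<Longrightarrow> b > 0 \<Longrightarrow> R*S/(a*b) - R*S/b^2 = (b-a)*(R*S/(a*b^2))"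
    by (simp add: field_simps power2_eq_square)
  ultimately have "R*S/((x+S)*(h+S)) - R*S/(h+S)^2 = ((h+S)-(x+S))*(R*S/((x+S)*(h+S)^2))"
    by blast
  moreover have gen3: "\<And>A B Z::real. A - B = ((h+S)-(x+S))*Z \<Longrightarrow> A = B - (x-h)*Z"
    by (simp add: algebra_simps)
  ultimately have q: "R*S/((x+S)*(h+S)) = R*S/(h+S)^2 - (x-h)*(R*S/((x+S)*(h+S)^2))" by blast
  have gen2: "\<And>A B Q. A = B - (x-h)*Q \<Longrightarrow>
     A - c - \<gamma>*(x+h)/2 = (B - c - \<gamma>*h) - (x-h)*(Q + \<gamma>/2)"
    by (simp add: algebra_simps) (simp add: field_simps)
  show ?thesis unfolding id1 gen2[OF q] ..
qed

lemma foc_nec: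
  fixes R S c \<gamma> h :: real
  assumes R: "R > 0" and S: "S > 0" and g: "\<gamma> \<ge> 0" and h: "h \<ge> 0"
    and opt: "\<And>x. x \<ge> 0 \<Longrightarrow> x/(x+S)*R - c*x - \<gamma>/2*x^2 \<le> h/(h+S)*R - c*h - \<gamma>/2*h^2"
  shows "R*S \<le> (c+\<gamma>*h)*(h+S)^2" and "h > 0 \<Longrightarrow> R*S = (c+\<gamma>*h)*(h+S)^2"
proof -
  define D where "D = R*S/(h+S)^2 - c - \<gamma>*h"
  define K where "K = R/S^2 + \<gamma>/2"
  have "R/S^2 > 0" using R S by simp
  then have Kp: "K > 0" unfolding K_def using g by linarith
  have Qb: "0 \<le> R*S/((x+S)*(h+S)^2) + \<gamma>/2 \<and> R*S/((x+S)*(h+S)^2) + \<gamma>/2 \<le> K" if "x \<ge> 0" for x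
  proof -
    have "S*S^2 \<le> (x+S)*(h+S)^2"
      using that S h by (intro mult_mono power_mono) auto
    moreover have "0 < S*S^2" using S by auto
    ultimately have "R*S/((x+S)*(h+S)^2) \<le> R*S/(S*S^2)"
      using R S h that by (intro divide_left_mono) (auto intro!: mult_pos_pos)
    also have "R*S/(S*S^2) = R/S^2" using S by simp
    finally show ?thesis unfolding K_def using R S g h that
      by (auto intro!: add_nonneg_nonneg divide_nonneg_nonneg)
  qed
  have fd: "(x/(x+S)*R - c*x - \<gamma>/2*x^2) - (h/(h+S)*R - c*h - \<gamma>/2*h^2)
      = (x-h)*(D - (x-h)*(R*S/((x+S)*(h+S)^2) + \<gamma>/2))" if "x \<ge> 0" for x
    unfolding D_def by (rule diff_id[OF S h that])
  have D1: "D \<le> 0"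
  proof (rule ccontr)
    assume "\<not> D \<le> 0"
    then have Dp: "D > 0" by simp
    define t where "t = D/(2*K)"
    have tp: "t > 0" unfolding t_def using Dp Kp by auto
    define Q where "Q = R*S/((h+t+S)*(h+S)^2) + \<gamma>/2"
    have "Q \<le> K" unfolding Q_def using Qb[of "h+t"] tp h by auto
    then have "t*Q \<le> t*K" using tp by (intro mult_left_mono) auto
    also have "t*K = D/2" unfolding t_def using Kp by simp
    finally have "D - t*Q > 0" using Dp by linarith
    then have "t*(D - t*Q) > 0" using tp by simp
    moreover have "t*(D - t*Q) \<le> 0"
      using fd[of "h+t"] opt[of "h+t"] tp h unfolding Q_def by simp
    ultimately show False by linarith
  qed
  have D2: "D = 0" if hp: "h > 0"
  proof (rule ccontr)
    assume "D \<noteq> 0"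
    then have Dn: "D < 0" using D1 by simp
    define t where "t = min h (-D/(2*K))"
    have "-D/(2*K) > 0" using Dn Kp by (intro divide_pos_pos) auto
    then have tp: "t > 0" unfolding t_def using hp by auto
    have th: "t \<le> h" unfolding t_def by simp
    have tK: "t*K \<le> -D/2"
    proof -
      have "t \<le> -D/(2*K)" unfolding t_def by simp
      then have "t*K \<le> (-D/(2*K))*K" using Kp by (intro mult_right_mono) auto
      also have "(-D/(2*K))*K = -D/2" using Kp by simp
      finally show ?thesis .
    qed
    define Q where "Q = R*S/((h-t+S)*(h+S)^2) + \<gamma>/2"
    have "Q \<le> K" unfolding Q_def using Qb[of "h-t"] th by auto
    then have "t*Q \<le> t*K" using tp by (intro mult_left_mono) auto
    then have "D + t*Q < 0" using tK Dn by linarith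
    then have "(-t)*(D + t*Q) > 0" using tp by (simp add: mult_pos_neg)
    moreover have "(-t)*(D - (-t)*Q) \<le> 0"
      using fd[of "h-t"] opt[of "h-t"] th unfolding Q_def by simp
    ultimately show False by simp
  qed
  have hS: "(h+S)^2 > 0" using h S by auto
  show "R*S \<le> (c+\<gamma>*h)*(h+S)^2"
    using D1 hS unfolding D_def by (simp add: pos_divide_le_eq algebra_simps)
  show "R*S = (c+\<gamma>*h)*(h+S)^2" if "h > 0"
    using D2[OF that] hS unfolding D_def by (simp add: field_simps)
qed



lemma cond_iff:
  fixes c :: "nat \<Rightarrow> real"
  assumes n: "2 \<le> n" and cp: "c n > 0" and R: "R > 0"
  shows "(c n < (C + R*\<gamma>/c n)/(real n - 1)) \<longleftrightarrow>
         (real n - 1)*R < \<gamma>*(R/c n)^2 + C*(R/c n)"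
proof -
  have n1: "real n - 1 > 0" using n by simp
  have u: "R/c n > 0" using cp R by simp
  have "(c n < (C + R*\<gamma>/c n)/(real n - 1)) \<longleftrightarrow> c n*(real n - 1) < C + R*\<gamma>/c n"
    using n1 by (simp add: pos_less_divide_eq mult.commute)
  also have "\<dots> \<longleftrightarrow> (R/c n)*(c n*(real n - 1)) < (R/c n)*(C + R*\<gamma>/c n)"
    by (rule mult_less_cancel_left_pos[OF u, symmetric])
  also have "(R/c n)*(c n*(real n - 1)) = (real n - 1)*R" using cp by simp
  also have "(R/c n)*(C + R*\<gamma>/c n) = \<gamma>*(R/c n)^2 + C*(R/c n)"
    using cp by (simp add: field_simps power2_eq_square)
  finally show ?thesis .
qed

definition Pn :: "nat \<Rightarrow> real \<Rightarrow> real \<Rightarrow> (nat \<Rightarrow> real) \<Rightarrow> nat \<Rightarrow> bool" where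
  "Pn N R \<gamma> c n \<longleftrightarrow> 2 \<le> n \<and> n \<le> N \<and>
        c n < ((\<Sum>i\<in>{1..n}. c i) + R * \<gamma> / c n) / (real n - 1)"

lemma num_active_Pn: "num_active N R \<gamma> c = (GREATEST n. Pn N R \<gamma> c n)"
  unfolding num_active_def Pn_def ..

lemma Pn2:
  assumes "N \<ge> 2" "c 1 > 0" "c 2 > 0" "R > 0" "\<gamma> \<ge> 0"
  shows "Pn N R \<gamma> c 2"
proof -
  have "R*\<gamma>/c 2 \<ge> 0" using assms by simp
  then have "0 < c 1 + R*\<gamma>/c 2" using assms(2) by linarith
  moreover have "{1..2::nat} = {1,2}" by auto
  ultimately show ?thesis unfolding Pn_def using assms by simp
qed

lemma num_active_props:
  assumes "Pn N R \<gamma> c 2"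
  shows "Pn N R \<gamma> c (num_active N R \<gamma> c)" "\<And>m. Pn N R \<gamma> c m \<Longrightarrow> m \<le> num_active N R \<gamma> c"
proof -
  have b: "\<And>y. Pn N R \<gamma> c y \<Longrightarrow> y \<le> N" unfolding Pn_def by simp
  show "Pn N R \<gamma> c (num_active N R \<gamma> c)" unfolding num_active_Pn
    by (rule GreatestI_nat[of "Pn N R \<gamma> c" 2 N, OF assms b])
  show "\<And>m. Pn N R \<gamma> c m \<Longrightarrow> m \<le> num_active N R \<gamma> c" unfolding num_active_Pn
    by (rule Greatest_le_nat[of "Pn N R \<gamma> c" _ N, OF _ b])
qed

lemma num_active_eq:
  assumes "Pn N R \<gamma> c n" "\<And>m. Pn N R \<gamma> c m \<Longrightarrow> m \<le> n"
  shows "num_active N R \<gamma> c = n"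
  unfolding num_active_Pn by (rule Greatest_equality) (use assms in auto)

lemma mono_R:
  assumes "Pn N R \<gamma> c 2" "R \<le> R'" "\<gamma> \<ge> 0" "\<forall>i\<in>{1..N}. c i > 0"
  shows "num_active N R \<gamma> c \<le> num_active N R' \<gamma> c"
proof -
  have imp: "Pn N R' \<gamma> c m" if "Pn N R \<gamma> c m" for m
  proof -
    have m: "2 \<le> m" "m \<le> N" using that unfolding Pn_def by auto
    then have "c m > 0" using assms(4) by auto
    then have "R*\<gamma>/c m \<le> R'*\<gamma>/c m" using assms
      by (intro divide_right_mono mult_right_mono) auto
    moreover have "real m - 1 > 0" using m by simp
    ultimately show ?thesis using that unfolding Pn_def
      by (smt (verit) divide_right_mono)
  qed
  show ?thesis
    by (rule num_active_props(2)[OF imp[OF assms(1)] imp[OF num_active_props(1)[OF assms(1)]]])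
qed

lemma mono_g:
  assumes "Pn N R \<gamma> c 2" "\<gamma> \<le> \<gamma>'" "R > 0" "\<forall>i\<in>{1..N}. c i > 0"
  shows "num_active N R \<gamma> c \<le> num_active N R \<gamma>' c"
proof -
  have imp: "Pn N R \<gamma>' c m" if "Pn N R \<gamma> c m" for m
  proof -
    have m: "2 \<le> m" "m \<le> N" using that unfolding Pn_def by auto
    then have "c m > 0" using assms(4) by auto
    then have "R*\<gamma>/c m \<le> R*\<gamma>'/c m" using assms
      by (intro divide_right_mono mult_left_mono) auto
    moreover have "real m - 1 > 0" using m by simp
    ultimately show ?thesis using that unfolding Pn_def
      by (smt (verit) divide_right_mono)
  qed
  show ?thesis
    by (rule num_active_props(2)[OF imp[OF assms(1)] imp[OF num_active_props(1)[OF assms(1)]]])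
qed



lemma sum_split_bound:
  fixes c :: "nat \<Rightarrow> real"
  assumes "n < m" "\<forall>i. n < i \<and> i \<le> m \<longrightarrow> c i \<le> c m"
  shows "(\<Sum>i\<in>{1..m}. c i) \<le> (\<Sum>i\<in>{1..n}. c i) + (real m - real n) * c m"
proof -
  have "m = n + (m - n)" using assms by simp
  then have "(\<Sum>i\<in>{1..m}. c i) = (\<Sum>i\<in>{1..n}. c i) + (\<Sum>i\<in>{n+1..n+(m-n)}. c i)"
    using sum.ub_add_nat[of 1 n c "m-n"] by simp
  also have "(\<Sum>i\<in>{n+1..n+(m-n)}. c i) \<le> of_nat (card {n+1..n+(m-n)}) * c m"
    by (rule sum_bounded_above) (use assms in auto)
  also have "of_nat (card {n+1..n+(m-n)}) = real m - real n" using assms by simp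
  finally show ?thesis by simp
qed

lemma characterize:
  fixes c :: "nat \<Rightarrow> real"
  assumes cp: "\<forall>i\<in>{1..N}. c i > 0"
    and mono: "\<forall>i j. 1 \<le> i \<longrightarrow> i \<le> j \<longrightarrow> j \<le> N \<longrightarrow> c i \<le> c j"
    and R: "R > 0" and g: "\<gamma> \<ge> 0" and H: "H > 0" and n: "2 \<le> n" "n \<le> N"
    and eq: "\<gamma>*H^2 + (\<Sum>i\<in>{1..n}. c i)*H = (real n - 1)*R"
    and low: "c n * H < R" and high: "\<forall>i. n < i \<and> i \<le> N \<longrightarrow> R \<le> c i * H"
  shows "num_active N R \<gamma> c = n"
proof (rule num_active_eq)
  define C where "C = (\<Sum>i\<in>{1..n}. c i)"
  have Cp: "C > 0" unfolding C_def using cp n by (intro sum_pos) auto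
  have cn: "c n > 0" using cp n by auto
  show "Pn N R \<gamma> c n"
  proof -
    define u where "u = R/c n"
    have uH: "H < u" unfolding u_def using low cn by (simp add: pos_less_divide_eq mult.commute)
    have "\<gamma>*H^2 \<le> \<gamma>*u^2" using uH H g by (intro mult_left_mono power_mono) auto
    moreover have "C*H < C*u" using uH Cp by simp
    ultimately have "(real n - 1)*R < \<gamma>*u^2 + C*u" using eq unfolding C_def by linarith
    then show ?thesis unfolding Pn_def u_def C_def using cond_iff[of n c, OF n(1) cn R] n by simp
  qed
  show "m \<le> n" if Pm: "Pn N R \<gamma> c m" for m
  proof (rule ccontr)
    assume "\<not> m \<le> n"
    then have mn: "n < m" by simp
    have m: "2 \<le> m" "m \<le> N" using Pm unfolding Pn_def by auto
    have cm: "c m > 0" using cp m by auto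
    define u where "u = R/c m"
    have up: "u > 0" unfolding u_def using R cm by simp
    have uH: "u \<le> H" unfolding u_def using high mn m cm by (simp add: pos_divide_le_eq mult.commute)
    define Cm where "Cm = (\<Sum>i\<in>{1..m}. c i)"
    have "(real m - 1)*R < \<gamma>*u^2 + Cm*u"
      using Pm cond_iff[of m c R Cm \<gamma>, OF m(1) cm R] unfolding Pn_def u_def Cm_def by simp
    moreover have "Cm \<le> C + (real m - real n) * c m"
      unfolding Cm_def C_def
      by (rule sum_split_bound[OF mn]) (use mono m mn n in auto)
    then have "Cm*u \<le> (C + (real m - real n) * c m)*u" using up by (intro mult_right_mono) auto
    moreover have "(C + (real m - real n) * c m)*u = C*u + (real m - real n)*R"
      unfolding u_def using cm by (simp add: field_simps)
    moreover have "\<gamma>*u^2 \<le> \<gamma>*H^2" using uH up g by (intro mult_left_mono power_mono) auto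
    moreover have "C*u \<le> C*H" using uH Cp by simp
    ultimately have "(real m - 1)*R < \<gamma>*H^2 + C*H + (real m - real n)*R" by linarith
    also have "\<dots> = (real m - 1)*R" using eq unfolding C_def by (simp add: algebra_simps)
    finally show False by simp
  qed
qed



lemma root_exists:
  fixes C a \<gamma> :: real
  assumes "C > 0" "a > 0" "\<gamma> \<ge> 0"
  shows "\<exists>H>0. \<gamma>*H^2 + C*H = a"
proof -
  define s where "s = sqrt (C^2 + 4*\<gamma>*a)"
  have nn: "0 \<le> C^2 + 4*\<gamma>*a" using assms by (intro add_nonneg_nonneg) auto
  then have s0: "s \<ge> 0" unfolding s_def by simp
  from nn have s2: "s^2 = C^2 + 4*\<gamma>*a" unfolding s_def by simp
  have Cs: "C + s > 0" using assms s0 by simp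
  define H where "H = 2*a/(C+s)"
  have "H > 0" unfolding H_def using Cs assms by simp
  moreover have "\<gamma>*H^2 + C*H = a"
  proof -
    have "\<gamma>*H^2 + C*H = 2*a*(2*a*\<gamma> + C*(C+s))/(C+s)^2"
    proof -
      have gen: "\<And>q::real. q > 0 \<Longrightarrow> \<gamma>*(2*a/q)^2 + C*(2*a/q) = 2*a*(2*a*\<gamma> + C*q)/q^2"
        by (simp add: field_simps power2_eq_square)
      show ?thesis unfolding H_def by (rule gen[OF Cs])
    qed
    also have "2*a*\<gamma> = (s^2 - C^2)/2" using s2 by simp
    also have "(s^2 - C^2)/2 + C*(C+s) = (C+s)^2/2" by (simp add: field_simps power2_eq_square)
    also have "2*a*((C+s)^2/2)/(C+s)^2 = a" using Cs by simp
    finally show ?thesis .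
  qed
  ultimately show ?thesis by blast
qed

lemma exist_H:
  fixes c :: "nat \<Rightarrow> real"
  assumes N2: "N \<ge> 2" and cp: "\<forall>i\<in>{1..N}. c i > 0"
    and mono: "\<forall>i j. 1 \<le> i \<longrightarrow> i \<le> j \<longrightarrow> j \<le> N \<longrightarrow> c i \<le> c j"
    and R: "R > 0" and g: "\<gamma> \<ge> 0"
  shows "\<exists>H n. H > 0 \<and> 2 \<le> n \<and> n \<le> N \<and> \<gamma>*H^2 + (\<Sum>i\<in>{1..n}. c i)*H = (real n - 1)*R
     \<and> (\<forall>i\<in>{1..n}. c i * H < R) \<and> (\<forall>i. n < i \<and> i \<le> N \<longrightarrow> R \<le> c i * H)"
proof -
  have P2: "Pn N R \<gamma> c 2" using Pn2[OF N2 _ _ R g] cp N2 by auto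
  define n where "n = num_active N R \<gamma> c"
  have Pn: "Pn N R \<gamma> c n" unfolding n_def by (rule num_active_props(1)[OF P2])
  have mx: "\<And>m. Pn N R \<gamma> c m \<Longrightarrow> m \<le> n" unfolding n_def by (rule num_active_props(2)[OF P2])
  have n: "2 \<le> n" "n \<le> N" using Pn unfolding Pn_def by auto
  define C where "C = (\<Sum>i\<in>{1..n}. c i)"
  have Cp: "C > 0" unfolding C_def using cp n by (intro sum_pos) auto
  have cn: "c n > 0" using cp n by auto
  have a: "(real n - 1)*R > 0" using n R by simp
  obtain H where H: "H > 0" "\<gamma>*H^2 + C*H = (real n - 1)*R" using root_exists[OF Cp a g] by blast
  have low: "c n * H < R"
  proof (rule ccontr)
    assume "\<not> c n * H < R"
    then have uH: "R/c n \<le> H" using cn by (simp add: pos_divide_le_eq mult.commute)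
    have u0: "R/c n > 0" using R cn by simp
    have "(real n - 1)*R < \<gamma>*(R/c n)^2 + C*(R/c n)"
      using Pn cond_iff[of n c R C \<gamma>, OF n(1) cn R] unfolding Pn_def C_def by simp
    moreover have "\<gamma>*(R/c n)^2 \<le> \<gamma>*H^2" using uH u0 g by (intro mult_left_mono power_mono) auto
    moreover have "C*(R/c n) \<le> C*H" using uH Cp by (intro mult_left_mono) auto
    ultimately show False using H by linarith
  qed
  have lowall: "\<forall>i\<in>{1..n}. c i * H < R"
  proof
    fix i assume "i \<in> {1..n}"
    then have "c i \<le> c n" using mono n by auto
    then have "c i * H \<le> c n * H" using H by (intro mult_right_mono) auto
    then show "c i * H < R" using low by linarith
  qed
  have highall: "\<forall>i. n < i \<and> i \<le> N \<longrightarrow> R \<le> c i * H"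
  proof (intro allI impI)
    fix i assume i: "n < i \<and> i \<le> N"
    then have n1: "n + 1 \<le> N" by simp
    have c1: "c (n+1) > 0" using cp n1 by auto
    have notP: "\<not> Pn N R \<gamma> c (n+1)" using mx by fastforce
    define v where "v = R/c (n+1)"
    have v0: "v > 0" unfolding v_def using R c1 by simp
    have Csuc: "(\<Sum>i\<in>{1..n+1}. c i) = C + c (n+1)" unfolding C_def by simp
    have "\<not> (real (n+1) - 1)*R < \<gamma>*v^2 + (C + c (n+1))*v"
      using notP cond_iff[of "n+1" c R "C + c (n+1)" \<gamma>] c1 R n n1 Csuc unfolding Pn_def v_def by auto
    moreover have "c (n+1) * v = R" unfolding v_def using c1 by simp
    ultimately have vle: "\<gamma>*v^2 + C*v \<le> (real n - 1)*R" by (simp add: algebra_simps)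
    have "v \<le> H"
    proof (rule ccontr)
      assume "\<not> v \<le> H"
      then have Hv: "H < v" by simp
      have "\<gamma>*H^2 \<le> \<gamma>*v^2" using Hv H g by (intro mult_left_mono power_mono) auto
      moreover have "C*H < C*v" using Hv Cp by simp
      ultimately show False using H vle by linarith
    qed
    then have "R \<le> c (n+1) * H" unfolding v_def using c1 by (simp add: pos_divide_le_eq mult.commute)
    moreover have "c (n+1) \<le> c i" using mono i by auto
    then have "c (n+1) * H \<le> c i * H" using H by (intro mult_right_mono) auto
    ultimately show "R \<le> c i * H" by linarith
  qed
  show ?thesis using H n lowall highall unfolding C_def by blast
qed



lemma construct:
  fixes c :: "nat \<Rightarrow> real"
  assumes cp: "\<forall>i\<in>{1..N}. c i > 0"
    and R: "R > 0" and g: "\<gamma> \<ge> 0" and H: "H > 0" and n: "2 \<le> n" "n \<le> N"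
    and eq: "\<gamma>*H^2 + (\<Sum>i\<in>{1..n}. c i)*H = (real n - 1)*R"
    and lowall: "\<forall>i\<in>{1..n}. c i * H < R" and highall: "\<forall>i. n < i \<and> i \<le> N \<longrightarrow> R \<le> c i * H"
  shows "is_equilibrium N R \<gamma> c (\<lambda>i. if i \<in> {1..n} then H*(R - c i*H)/(R+\<gamma>*H^2) else 0)"
proof -
  define D where "D = R + \<gamma>*H^2"
  have Dp: "D > 0" unfolding D_def using R g by (simp add: add_pos_nonneg)
  define h where "h = (\<lambda>i. if i \<in> {1..n} then H*(R - c i*H)/(R+\<gamma>*H^2) else (0::real))"
  have hin: "h i = H*(R - c i*H)/D" if "i \<in> {1..n}" for i
    by (simp only: h_def D_def if_P[OF that])
  have hout: "h i = 0" if "i \<notin> {1..n}" for i by (simp only: h_def if_not_P[OF that])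
  have hpos: "h i > 0" if "i \<in> {1..n}" for i
    using hin[OF that] lowall that H Dp by simp
  have hnn: "\<forall>i\<in>{1..N}. h i \<ge> 0"
    using hpos hout by (metis less_eq_real_def order_refl)
  have tot: "total_hash N h = H"
  proof -
    have "sum h {1..N} = sum h {1..n}"
      by (rule sum.mono_neutral_right) (use n hout in auto)
    also have "\<dots> = (\<Sum>i\<in>{1..n}. (H/D)*(R - c i*H))"
      by (rule sum.cong) (auto simp: hin)
    also have "\<dots> = (H/D)*(\<Sum>i\<in>{1..n}. (R - c i*H))" by (simp add: sum_distrib_left)
    also have "(\<Sum>i\<in>{1..n}. (R - c i*H)) = real n * R - (\<Sum>i\<in>{1..n}. c i)*H"
      by (simp add: sum_subtractf sum_distrib_right)
    also have "real n * R - (\<Sum>i\<in>{1..n}. c i)*H = D" unfolding D_def using eq by (simp add: algebra_simps)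
    finally show ?thesis unfolding total_hash_def using Dp by simp
  qed
  have "\<forall>i\<in>{1..N}. \<forall>x::real. x \<ge> 0 \<longrightarrow> payoff N R \<gamma> c (h(i := x)) i \<le> payoff N R \<gamma> c h i"
  proof (intro ballI allI impI)
    fix i x assume i: "i \<in> {1..N}" and x: "(x::real) \<ge> 0"
    define S where "S = H - h i"
    have tu: "total_hash N (h(i:=x)) = x + S" unfolding S_def using total_upd[OF i] tot by simp
    have ci: "c i > 0" using cp i by auto
    show "payoff N R \<gamma> c (h(i := x)) i \<le> payoff N R \<gamma> c h i"
    proof (cases "i \<in> {1..n}")
      case True
      have hi: "h i = H*(R - c i*H)/D" by (rule hin[OF True])
      have gS: "\<And>D. D = R + \<gamma>*H^2 \<Longrightarrow> D > 0 \<Longrightarrow> H - H*(R - c i*H)/D = H*(\<gamma>*H^2 + c i*H)/D"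
        by (simp add: field_simps)
      have Sv: "S = H*(\<gamma>*H^2 + c i*H)/D" unfolding S_def hi by (rule gS[OF D_def Dp])
      have Sp: "S > 0" unfolding Sv using H ci g Dp by (intro divide_pos_pos mult_pos_pos add_nonneg_pos) auto
      have gF: "\<And>D. D = R + \<gamma>*H^2 \<Longrightarrow> D > 0 \<Longrightarrow>
          R*(H*(\<gamma>*H^2 + c i*H)/D) = (c i + \<gamma>*(H*(R - c i*H)/D))*H^2"
        by (simp add: field_simps power2_eq_square)
      have hS: "h i + S = H" unfolding S_def by simp
      have foc: "R*S = (c i + \<gamma>*h i)*(h i + S)^2" unfolding hS unfolding Sv hi by (rule gF[OF D_def Dp])
      have "x/(x+S)*R - c i*x - \<gamma>/2*x^2 \<le> h i/(h i+S)*R - c i*h i - \<gamma>/2*(h i)^2"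
        by (rule foc_suff[OF R Sp g _ x foc]) (use hpos[OF True] in simp)
      then show ?thesis unfolding payoff_def tu tot using Sp x H hS by simp
    next
      case False
      have hi: "h i = 0" by (rule hout[OF False])
      have "n < i" "i \<le> N" using False i by auto
      then have hc: "R \<le> c i * H" using highall by auto
      have SH: "S = H" unfolding S_def hi by simp
      have "x/(x+S)*R - c i*x - \<gamma>/2*x^2 \<le> 0"
        by (rule zero_opt[OF R _ g x]) (use H SH hc in auto)
      then show ?thesis unfolding payoff_def tu tot using SH x H hi by simp
    qed
  qed
  then show ?thesis using hnn unfolding is_equilibrium_def h_def by simp
qed



lemma prefix_set:
  assumes sub: "A \<subseteq> {1..(N::nat)}" and cl: "\<forall>j\<in>A. \<forall>i. 1 \<le> i \<and> i \<le> j \<longrightarrow> i \<in> A"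
  shows "A = {1..card A}"
proof (cases "A = {}")
  case True then show ?thesis by simp
next
  case False
  have fin: "finite A" using sub finite_subset by blast
  define m where "m = Max A"
  have mA: "m \<in> A" unfolding m_def using fin False by simp
  have "A = {1..m}"
  proof
    show "A \<subseteq> {1..m}" using sub fin unfolding m_def by (auto intro: Max_ge)
    show "{1..m} \<subseteq> A" using cl mA by auto
  qed
  then show ?thesis by simp
qed

lemma payoff_dev:
  assumes "i \<in> {1..N}" "total_hash N h - h i + x > 0"
  shows "payoff N R \<gamma> c (h(i:=x)) i = x/(total_hash N h - h i + x)*R - c i*x - \<gamma>/2*x^2"
  unfolding payoff_def total_upd[OF assms(1)] using assms(2) by simp

lemma unique:
  fixes c :: "nat \<Rightarrow> real"
  assumes cp: "\<forall>i\<in>{1..N}. c i > 0"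
    and mono: "\<forall>i j. 1 \<le> i \<longrightarrow> i \<le> j \<longrightarrow> j \<le> N \<longrightarrow> c i \<le> c j"
    and R: "R > 0" and g: "\<gamma> \<ge> 0" and N2: "N \<ge> 2" and eqm: "is_equilibrium N R \<gamma> c h"
  shows "card (active_miners N h) = num_active N R \<gamma> c"
proof -
  have hnn: "\<And>i. i \<in> {1..N} \<Longrightarrow> h i \<ge> 0" using eqm unfolding is_equilibrium_def by auto
  have opt: "\<And>i x. i \<in> {1..N} \<Longrightarrow> x \<ge> 0 \<Longrightarrow> payoff N R \<gamma> c (h(i := x)) i \<le> payoff N R \<gamma> c h i"
    using eqm unfolding is_equilibrium_def by auto
  define H where "H = total_hash N h"
  have H0: "H \<ge> 0" unfolding H_def total_hash_def using hnn by (intro sum_nonneg) auto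
  have hle: "h i \<le> H" if "i \<in> {1..N}" for i
    unfolding H_def total_hash_def by (rule member_le_sum[OF that]) (use hnn in auto)
  have Hp: "H > 0"
  proof (rule ccontr)
    assume "\<not> H > 0"
    then have HH: "H = 0" using H0 by simp
    have one: "1 \<in> {1..N}" using N2 by simp
    have h1: "h 1 = 0" using hle[OF one] hnn[OF one] HH by simp
    define x where "x = R/(R + c 1 + \<gamma>)"
    have c1: "c 1 > 0" using cp one by auto
    have den: "R + c 1 + \<gamma> > 0" using R c1 g by simp
    have x0: "x > 0" unfolding x_def using R den by simp
    have x1: "x < 1" unfolding x_def using den c1 g by simp
    have "payoff N R \<gamma> c (h(1 := x)) 1 = x/x*R - c 1*x - \<gamma>/2*x^2"
      using payoff_dev[OF one, of h x R \<gamma> c] HH h1 x0 unfolding H_def by simp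
    also have "\<dots> = R - c 1*x - \<gamma>/2*x^2" using x0 by simp
    finally have pd: "payoff N R \<gamma> c (h(1 := x)) 1 = R - c 1*x - \<gamma>/2*x^2" .
    have p0: "payoff N R \<gamma> c h 1 = 0" unfolding payoff_def using HH unfolding H_def by simp
    have "x^2 \<le> x" using x0 x1 by (simp add: power2_eq_square mult_left_le)
    then have "\<gamma>*x^2 \<le> \<gamma>*x" using g by (intro mult_left_mono) auto
    moreover have "\<gamma>*x^2 \<ge> 0" using g by simp
    ultimately have "\<gamma>/2*x^2 \<le> \<gamma>*x" by linarith
    moreover have "(c 1 + \<gamma>)*x < R"
    proof -
      have "(c 1 + \<gamma>)*x = (c 1 + \<gamma>)*R/(R + c 1 + \<gamma>)" unfolding x_def by simp
      also have "\<dots> < R" using den R by (simp add: pos_divide_less_eq)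
      finally show ?thesis .
    qed
    ultimately have "payoff N R \<gamma> c (h(1 := x)) 1 > payoff N R \<gamma> c h 1"
      unfolding pd p0 by (simp add: algebra_simps)
    then show False using opt[OF one, of x] x0 by simp
  qed
  have Sp: "H - h i > 0" if i: "i \<in> {1..N}" for i
  proof (rule ccontr)
    assume "\<not> H - h i > 0"
    then have hi: "h i = H" using hle[OF i] by simp
    define x where "x = H/2"
    have x0: "x > 0" unfolding x_def using Hp by simp
    have ci: "c i > 0" using cp i by auto
    have pd: "payoff N R \<gamma> c (h(i := x)) i = x/x*R - c i*x - \<gamma>/2*x^2"
      using payoff_dev[OF i, of h x R \<gamma> c] hi x0 unfolding H_def by simp
    have ph: "payoff N R \<gamma> c h i = H/H*R - c i*H - \<gamma>/2*H^2"
      unfolding payoff_def using Hp hi unfolding H_def by simp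
    have "c i*x < c i*H" unfolding x_def using ci Hp by simp
    moreover have "\<gamma>/2*x^2 \<le> \<gamma>/2*H^2" unfolding x_def using g Hp
      by (intro mult_left_mono power_mono) auto
    ultimately have "payoff N R \<gamma> c (h(i := x)) i > payoff N R \<gamma> c h i"
      unfolding pd ph using x0 Hp by simp
    then show False using opt[OF i, of x] x0 by simp
  qed
  have focs: "R*(H - h i) \<le> (c i + \<gamma>*h i)*H^2 \<and> (h i > 0 \<longrightarrow> R*(H - h i) = (c i + \<gamma>*h i)*H^2)"
    if i: "i \<in> {1..N}" for i
  proof -
    define S where "S = H - h i"
    have S0: "S > 0" unfolding S_def using Sp[OF i] .
    have hS: "h i + S = H" unfolding S_def by simp
    have o: "x/(x+S)*R - c i*x - \<gamma>/2*x^2 \<le> h i/(h i+S)*R - c i*h i - \<gamma>/2*(h i)^2"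
      if x: "x \<ge> 0" for x
    proof -
      have "payoff N R \<gamma> c (h(i := x)) i = x/(x+S)*R - c i*x - \<gamma>/2*x^2"
        using payoff_dev[OF i, of h x R \<gamma> c] S0 x unfolding S_def H_def by (simp add: add.commute)
      moreover have "payoff N R \<gamma> c h i = h i/(h i+S)*R - c i*h i - \<gamma>/2*(h i)^2"
        unfolding payoff_def hS using Hp unfolding H_def by simp
      ultimately show ?thesis using opt[OF i x] by simp
    qed
    from foc_nec[OF R S0 g hnn[OF i] o] show ?thesis unfolding hS S_def by simp
  qed
  have act_iff: "h i > 0 \<longleftrightarrow> c i * H < R" if i: "i \<in> {1..N}" for i
  proof
    assume hp: "h i > 0"
    then have e: "R*(H - h i) = (c i + \<gamma>*h i)*H^2" using focs[OF i] by simp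
    have "\<gamma>*h i*H^2 \<ge> 0" using g hp by simp
    then have "c i * H^2 \<le> R*(H - h i)" using e by (simp add: algebra_simps)
    also have "\<dots> < R*H" using R hp by simp
    finally have "(c i * H) * H < R * H" by (simp add: power2_eq_square mult.assoc)
    then show "c i * H < R" using Hp by simp
  next
    assume lt: "c i * H < R"
    show "h i > 0"
    proof (rule ccontr)
      assume "\<not> h i > 0"
      then have "h i = 0" using hnn[OF i] by simp
      then have "R*H \<le> c i*H^2" using focs[OF i] by simp
      then have "R*H \<le> (c i * H) * H" by (simp add: power2_eq_square mult.assoc)
      then have "R \<le> c i * H" using Hp by simp
      then show False using lt by simp
    qed
  qed
  define A where "A = active_miners N h"
  have Aeq: "A = {i\<in>{1..N}. c i * H < R}" unfolding A_def active_miners_def using act_iff by auto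
  have Asub: "A \<subseteq> {1..N}" unfolding Aeq by auto
  have Acl: "\<forall>j\<in>A. \<forall>i. 1 \<le> i \<and> i \<le> j \<longrightarrow> i \<in> A"
  proof (intro ballI allI impI)
    fix j i assume j: "j \<in> A" and ij: "1 \<le> i \<and> i \<le> j"
    have jN: "j \<le> N" "c j * H < R" using j unfolding Aeq by auto
    have "c i \<le> c j" using mono ij jN by auto
    then have "c i * H \<le> c j * H" using Hp by (intro mult_right_mono) auto
    then show "i \<in> A" unfolding Aeq using ij jN by auto
  qed
  define n where "n = card A"
  have An: "A = {1..n}" unfolding n_def by (rule prefix_set[OF Asub Acl])
  have memA: "i \<in> {1..n} \<longleftrightarrow> h i > 0" if iN: "i \<in> {1..N}" for i
  proof -
    have "i \<in> {1..n} \<longleftrightarrow> i \<in> A" by (simp only: An)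
    also have "\<dots> \<longleftrightarrow> c i * H < R" unfolding Aeq using iN by simp
    also have "\<dots> \<longleftrightarrow> h i > 0" using act_iff[OF iN] by simp
    finally show ?thesis .
  qed
  have nN: "n \<le> N" using card_mono[OF _ Asub] unfolding n_def by simp
  define D where "D = R + \<gamma>*H^2"
  define C where "C = (\<Sum>i\<in>{1..n}. c i)"
  have "H*D = (\<Sum>i\<in>{1..N}. h i * D)" unfolding H_def total_hash_def by (simp add: sum_distrib_right)
  also have "\<dots> = (\<Sum>i\<in>{1..n}. h i * D)"
  proof (rule sum.mono_neutral_right)
    show "{1..n} \<subseteq> {1..N}" using nN by auto
    show "\<forall>i\<in>{1..N} - {1..n}. h i * D = 0"
    proof
      fix i assume i: "i \<in> {1..N} - {1..n}"
      then have "\<not> h i > 0" using memA[of i] by auto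
      moreover have "h i \<ge> 0" using hnn i by simp
      ultimately have "h i = 0" by simp
      then show "h i * D = 0" by simp
    qed
  qed simp
  also have "\<dots> = (\<Sum>i\<in>{1..n}. R*H - c i * H^2)"
  proof (rule sum.cong)
    fix i assume i: "i \<in> {1..n}"
    then have iN: "i \<in> {1..N}" using nN by auto
    have "h i > 0" using i memA[OF iN] by simp
    then have "R*(H - h i) = (c i + \<gamma>*h i)*H^2" using focs[OF iN] by simp
    then show "h i * D = R*H - c i * H^2" unfolding D_def by (simp add: algebra_simps)
  qed simp
  also have "\<dots> = real n * (R*H) - C*H^2" unfolding C_def by (simp add: sum_subtractf sum_distrib_right)
  finally have "H*D = H*(real n * R - C*H)" by (simp add: algebra_simps power2_eq_square)
  then have "D = real n * R - C*H" using Hp by simp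
  then have eq: "\<gamma>*H^2 + C*H = (real n - 1)*R" unfolding D_def by (simp add: algebra_simps)
  have n2: "2 \<le> n"
  proof (rule ccontr)
    assume "\<not> 2 \<le> n"
    then have "n = 0 \<or> n = 1" by auto
    then show False
    proof
      assume "n = 0"
      then have "C = 0" unfolding C_def by simp
      moreover have "\<gamma>*H^2 \<ge> 0" using g by simp
      ultimately show False using eq \<open>n = 0\<close> R by simp
    next
      assume n1: "n = 1"
      then have "C = c 1" unfolding C_def by simp
      moreover have "c 1 > 0" using cp N2 by auto
      ultimately have "C*H > 0" using Hp by simp
      moreover have "\<gamma>*H^2 \<ge> 0" using g by simp
      ultimately show False using eq n1 by simp
    qed
  qed
  have low: "c n * H < R"
  proof -
    have "n \<in> {1..N}" using n2 nN by simp
    moreover have "n \<in> {1..n}" using n2 by simp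
    ultimately show ?thesis using memA act_iff by blast
  qed
  have high: "\<forall>i. n < i \<and> i \<le> N \<longrightarrow> R \<le> c i * H"
  proof (intro allI impI)
    fix i assume "n < i \<and> i \<le> N"
    then have "i \<notin> {1..n}" "i \<in> {1..N}" by auto
    then show "R \<le> c i * H" using memA act_iff by force
  qed
  have "num_active N R \<gamma> c = n"
    by (rule characterize[OF cp mono R g Hp n2 nN eq[unfolded C_def] low high])
  then show ?thesis unfolding n_def A_def by simp
qed


theorem proposition4p4:
  fixes N :: nat and c :: "nat \<Rightarrow> real" and R \<gamma> :: real
  assumes "N \<ge> 2"
    and "c 1 > 0"
    and "\<forall>i j. 1 \<le> i \<longrightarrow> i \<le> j \<longrightarrow> j \<le> N \<longrightarrow> c i \<le> c j"
    and "R > 0"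
    and "\<gamma> \<ge> 0"
  shows "(\<exists>h. is_equilibrium N R \<gamma> c h)
    \<and> (\<forall>h. is_equilibrium N R \<gamma> c h \<longrightarrow> card (active_miners N h) = num_active N R \<gamma> c)
    \<and> (\<forall>R'. R \<le> R' \<longrightarrow> num_active N R \<gamma> c \<le> num_active N R' \<gamma> c)
    \<and> (\<forall>\<gamma>'. \<gamma> \<le> \<gamma>' \<longrightarrow> num_active N R \<gamma> c \<le> num_active N R \<gamma>' c)"
proof -
  note N2 = assms(1) and mono = assms(3) and R = assms(4) and g = assms(5)
  have cp: "\<forall>i\<in>{1..N}. c i > 0"
  proof
    fix i assume i: "i \<in> {1..N}"
    then have "c 1 \<le> c i" using mono by auto
    then show "c i > 0" using assms(2) by linarith
  qed
  have P2: "Pn N R \<gamma> c 2" using Pn2[OF N2 _ _ R g] cp N2 by auto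
  have ex: "\<exists>h. is_equilibrium N R \<gamma> c h"
  proof -
    obtain H n where Hn: "H > 0" "2 \<le> n" "n \<le> N"
      "\<gamma>*H^2 + (\<Sum>i\<in>{1..n}. c i)*H = (real n - 1)*R"
      "\<forall>i\<in>{1..n}. c i * H < R" "\<forall>i. n < i \<and> i \<le> N \<longrightarrow> R \<le> c i * H"
      using exist_H[OF N2 cp mono R g] by blast
    show ?thesis using construct[OF cp R g Hn] by blast
  qed
  have un: "\<forall>h. is_equilibrium N R \<gamma> c h \<longrightarrow> card (active_miners N h) = num_active N R \<gamma> c"
    using unique[OF cp mono R g N2] by blast
  have mR: "\<forall>R'. R \<le> R' \<longrightarrow> num_active N R \<gamma> c \<le> num_active N R' \<gamma> c"
    using mono_R[OF P2 _ g cp] by blast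
  have mg: "\<forall>\<gamma>'. \<gamma> \<le> \<gamma>' \<longrightarrow> num_active N R \<gamma> c \<le> num_active N R \<gamma>' c"
    using mono_g[OF P2 _ R cp] by blast
  show ?thesis using ex un mR mg by blast
qed

end
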